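(* Let $k\geq3$ be an integer and let $0\leq a<\frac1k$ and $\frac{k-1}{k}<b\leq 1$. Then: (a) $\mathcal{W}_k(a,b)\subseteq C_k$; (b) $g_k^{-1}\big(\mathcal{W}_2(g_k(a),g_k(b))\big)\cap B_k=\emptyset$; (c) $\mathcal{W}_k(a,b)=C_k\cap g_k^{-1}\big(\mathcal{W}_2(g_k(a),g_k(b))\big)$.
   Context: For an integer $m\geq2$, $T_m:[0,1)\to[0,1)$ is $T_m(x)=mx\bmod1$, and for $0\leq c<e\leq1$, $\mathcal{W}_m(c,e)=\{x\in[0,1)\ :\ T_m^n(x)\notin(c,e)\ \forall n\geq0\}$. $B_k=\{\ell/k^n\ :\ n\geq1,\ 1\leq\ell\leq k^n-1\}$. $C_k$ is the set of $x\in[0,1]$ admitting an expansion $x=\sum_{n\geq1}a_nk^{-n}$ with all $a_n\in\{0,k-1\}$. The function $g_k:[0,1]\to[0,1]$ is defined as follows: write $x=\sum_{n\geq1}a_nk^{-n}$ with $a_n\in\{0,1,\dots,k-1\}$; if $N\geq1$ is the least index with $a_N\notin\{0,k-1\}$, set $g_k(x)=\sum_{n=1}^{N-1}\frac{a_n}{(k-1)2^n}+\frac{1}{2^N}$; if all $a_n\in\{0,k-1\}$, set $g_k(x)=\sum_{n\geq1}\frac{a_n}{(k-1)2^n}$ (independent of the choice of expansion). Preimages $g_k^{-1}$ are taken in $[0,1]$. *)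

theory Defs
  imports Complex_Main
begin

definition T :: "nat \<Rightarrow> real \<Rightarrow> real" where
  "T m x = real m * x - of_int \<lfloor>real m * x\<rfloor>"

definition W :: "nat \<Rightarrow> real \<Rightarrow> real \<Rightarrow> real set" where
  "W m c e = {x. 0 \<le> x \<and> x < 1 \<and> (\<forall>n. ((T m) ^^ n) x \<notin> {c<..<e})}"

definition B :: "nat \<Rightarrow> real set" where
  "B k = {real l / real k ^ n | l n. n \<ge> 1 \<and> 1 \<le> l \<and> l \<le> k ^ n - 1}"

text \<open>A k-adic expansion: digits d n for n \<ge> 1 (d 0 is ignored).\<close>
definition is_expansion :: "nat \<Rightarrow> (nat \<Rightarrow> nat) \<Rightarrow> real \<Rightarrow> bool" where
  "is_expansion k d x \<longleftrightarrow> (\<forall>n\<ge>1. d n < k) \<and>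
     x = (\<Sum>n. real (d (Suc n)) / real k ^ Suc n)"

definition C :: "nat \<Rightarrow> real set" where
  "C k = {x. 0 \<le> x \<and> x \<le> 1 \<and>
     (\<exists>d. (\<forall>n\<ge>1. d n \<in> {0, k - 1}) \<and> x = (\<Sum>n. real (d (Suc n)) / real k ^ Suc n))}"

definition gval :: "nat \<Rightarrow> (nat \<Rightarrow> nat) \<Rightarrow> real" where
  "gval k d =
    (if \<exists>N\<ge>1. d N \<notin> {0, k - 1} then
       (let N = (LEAST N. N \<ge> 1 \<and> d N \<notin> {0, k - 1}) in
         (\<Sum>n\<in>{1..<N}. real (d n) / (real (k - 1) * 2 ^ n)) + 1 / 2 ^ N)
     else (\<Sum>n. real (d (Suc n)) / (real (k - 1) * 2 ^ Suc n)))"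

text \<open>g_k(x), using any k-adic expansion of x (the value is independent of the choice).\<close>
definition g :: "nat \<Rightarrow> real \<Rightarrow> real" where
  "g k x = gval k (SOME d. is_expansion k d x)"

definition g_preimage :: "nat \<Rightarrow> real set \<Rightarrow> real set" where
  "g_preimage k S = {x. 0 \<le> x \<and> x \<le> 1 \<and> g k x \<in> S}"

end

theory Submission
  imports Defs
begin


definition prep :: "nat \<Rightarrow> (nat \<Rightarrow> nat) \<Rightarrow> nat \<Rightarrow> nat" where
  "prep j e = (\<lambda>n. if n = 1 then j else e (n - 1))"

definition sh :: "(nat \<Rightarrow> nat) \<Rightarrow> nat \<Rightarrow> nat" where
  "sh d = (\<lambda>n. if n = 0 then d 0 else d (Suc n))"

lemma prep_sh: "prep (d 1) (sh d) = d"
  unfolding prep_def sh_def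
proof
  fix n show "(if n = 1 then d 1 else if n - 1 = 0 then d 0 else d (Suc (n - 1))) = d n"
    by (cases n) auto
qed

lemma prep_Suc_Suc[simp]: "prep j e (Suc (Suc n)) = e (Suc n)"
  by (simp add: prep_def)
lemma prep_1[simp]: "prep j e (Suc 0) = j"
  by (simp add: prep_def)

lemma exp_summable:
  assumes "k \<ge> 2" "\<forall>n\<ge>1. d n < k"
  shows "summable (\<lambda>n. real (d (Suc n)) / real k ^ Suc n)"
proof (rule summable_comparison_test')
  show "summable (\<lambda>n. (1 / real k) ^ n)" using assms by (intro summable_geometric) auto
  fix n
  have "d (Suc n) < k" using assms by auto
  hence "real (d (Suc n)) \<le> real k" by simp
  hence "real (d (Suc n)) / real k ^ Suc n \<le> real k / real k ^ Suc n"
    by (intro divide_right_mono) auto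
  also have "\<dots> = (1 / real k) ^ n" using assms by (simp add: power_divide)
  finally show "norm (real (d (Suc n)) / real k ^ Suc n) \<le> (1 / real k) ^ n" by simp
qed

lemma exp_prep:
  assumes "k \<ge> 2" "is_expansion k e y" "j < k"
  shows "is_expansion k (prep j e) ((real j + y) / real k)"
proof -
  have s: "(\<lambda>n. real (e (Suc n)) / real k ^ Suc n) sums y"
    using assms exp_summable[of k e] unfolding is_expansion_def by (simp add: summable_sums)
  have "(\<lambda>n. (1 / real k) * (real (e (Suc n)) / real k ^ Suc n)) sums ((1/real k) * y)"
    by (rule sums_mult[OF s])
  hence "(\<lambda>n. real (prep j e (Suc (Suc n))) / real k ^ Suc (Suc n)) sums (y / real k)"
    by simp
  hence "(\<lambda>n. real (prep j e (Suc n)) / real k ^ Suc n) sums (y / real k + real j / real k)"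
    using sums_Suc_iff[where f="\<lambda>n. real (prep j e (Suc n)) / real k ^ Suc n"] by simp
  moreover have "\<forall>n\<ge>1. prep j e n < k"
    using assms unfolding is_expansion_def prep_def by auto
  ultimately show ?thesis unfolding is_expansion_def
    by (auto simp: sums_iff add_divide_distrib)
qed

lemma exp_split:
  assumes "k \<ge> 2" "is_expansion k d x"
  shows "d 1 < k \<and> is_expansion k (sh d) (suminf (\<lambda>n. real (sh d (Suc n)) / real k ^ Suc n))
     \<and> x = (real (d 1) + suminf (\<lambda>n. real (sh d (Suc n)) / real k ^ Suc n)) / real k"
proof -
  have dk: "\<forall>n\<ge>1. d n < k" using assms unfolding is_expansion_def by auto
  have shk: "\<forall>n\<ge>1. sh d n < k" using dk unfolding sh_def by auto
  have e: "is_expansion k (sh d) (suminf (\<lambda>n. real (sh d (Suc n)) / real k ^ Suc n))"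
    using shk unfolding is_expansion_def by auto
  have "is_expansion k (prep (d 1) (sh d)) ((real (d 1) + suminf (\<lambda>n. real (sh d (Suc n)) / real k ^ Suc n)) / real k)"
    using exp_prep[OF assms(1) e] dk by auto
  hence "x = (real (d 1) + suminf (\<lambda>n. real (sh d (Suc n)) / real k ^ Suc n)) / real k"
    using assms(2) unfolding prep_sh is_expansion_def by auto
  thus ?thesis using e dk by auto
qed

lemma exp_range:
  assumes "k \<ge> 2" "is_expansion k d x"
  shows "0 \<le> x \<and> x \<le> 1"
proof -
  have dk: "\<forall>n\<ge>1. d n < k" using assms unfolding is_expansion_def by auto
  have s1: "summable (\<lambda>n. real (d (Suc n)) / real k ^ Suc n)" using exp_summable assms dk by auto
  have g: "(\<lambda>n. (real k - 1) / real k * (1 / real k) ^ n) sums ((real k - 1) / real k * (1 / (1 - 1/real k)))"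
    using assms by (intro sums_mult geometric_sums) auto
  have "(real k - 1) / real k * (1 / (1 - 1/real k)) = 1" using assms by (simp add: field_simps)
  with g have g1: "(\<lambda>n. (real k - 1) / real k * (1 / real k) ^ n) sums 1" using assms(1) by (simp del: of_nat_Suc)
  have le: "real (d (Suc n)) / real k ^ Suc n \<le> (real k - 1) / real k * (1 / real k) ^ n" for n
  proof -
    have "d (Suc n) < k" using dk by auto
    hence "real (d (Suc n)) \<le> real k - 1" by linarith
    hence "real (d (Suc n)) / real k ^ Suc n \<le> (real k - 1) / real k ^ Suc n"
      by (intro divide_right_mono) auto
    thus ?thesis by (simp add: power_divide)
  qed
  have "x \<le> 1" using sums_le[OF le summable_sums[OF s1] g1] assms unfolding is_expansion_def by simp
  moreover have "0 \<le> suminf (\<lambda>n. real (d (Suc n)) / real k ^ Suc n)" by (rule suminf_nonneg[OF s1]) simp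
  hence "0 \<le> x" using assms unfolding is_expansion_def by simp
  ultimately show ?thesis by simp
qed




lemma gterm_le:
  assumes "k \<ge> 3" "d n \<in> {0, k - 1}"
  shows "0 \<le> real (d n) / (real (k - 1) * 2 ^ n) \<and> real (d n) / (real (k - 1) * 2 ^ n) \<le> 1 / 2 ^ n"
proof -
  have "real (d n) \<le> real (k - 1)" using assms by auto
  moreover have p: "real (k - 1) > 0" using assms by auto
  ultimately have "real (d n) / (real (k - 1) * 2 ^ n) \<le> real (k - 1) / (real (k - 1) * 2 ^ n)"
    by (intro divide_right_mono) auto
  also have "\<dots> = 1 / 2 ^ n" using p by simp
  finally show ?thesis by simp
qed

lemma gsum_props:
  assumes "k \<ge> 3" "\<forall>n\<ge>1. d n \<in> {0, k - 1}"
  shows "summable (\<lambda>n. real (d (Suc n)) / (real (k - 1) * 2 ^ Suc n))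
    \<and> 0 \<le> (\<Sum>n. real (d (Suc n)) / (real (k - 1) * 2 ^ Suc n))
    \<and> (\<Sum>n. real (d (Suc n)) / (real (k - 1) * 2 ^ Suc n)) \<le> 1"
proof -
  have le: "0 \<le> real (d (Suc n)) / (real (k - 1) * 2 ^ Suc n) \<and> real (d (Suc n)) / (real (k - 1) * 2 ^ Suc n) \<le> (1/2) * (1/2)^n" for n
    using gterm_le[OF assms(1), of d "Suc n"] assms(2) by (auto simp: power_divide)
  have g: "(\<lambda>n. (1/2) * (1/2::real)^n) sums ((1/2) * (1 / (1 - 1/2)))"
    by (intro sums_mult geometric_sums) auto
  hence g1: "(\<lambda>n. (1/2) * (1/2::real)^n) sums 1" by simp
  have s: "summable (\<lambda>n. real (d (Suc n)) / (real (k - 1) * 2 ^ Suc n))"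
    by (rule summable_comparison_test'[OF sums_summable[OF g1]]) (use le in auto)
  moreover have "(\<Sum>n. real (d (Suc n)) / (real (k - 1) * 2 ^ Suc n)) \<le> 1"
    using sums_le[OF _ summable_sums[OF s] g1] le by blast
  moreover have "0 \<le> (\<Sum>n. real (d (Suc n)) / (real (k - 1) * 2 ^ Suc n))"
    by (rule suminf_nonneg[OF s]) (use le in auto)
  ultimately show ?thesis by blast
qed

lemma gval_prep:
  assumes k: "k \<ge> 3"
  shows "gval k (prep j e) = (if j \<notin> {0, k - 1} then 1/2 else (real j / real (k - 1) + gval k e) / 2)"
proof (cases "j \<notin> {0, k - 1}")
  case True
  have ex: "\<exists>N\<ge>1. prep j e N \<notin> {0, k - 1}" using True by (intro exI[of _ 1]) auto
  have "(LEAST N. N \<ge> 1 \<and> prep j e N \<notin> {0, k - 1}) = 1"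
    by (rule Least_equality) (use True in auto)
  then show ?thesis using True ex unfolding gval_def Let_def by simp
next
  case False
  hence jS: "j \<in> {0, k - 1}" by simp
  show ?thesis
  proof (cases "\<exists>N\<ge>1. e N \<notin> {0, k - 1}")
    case True
    define M where "M = (LEAST N. N \<ge> 1 \<and> e N \<notin> {0, k - 1})"
    have M: "M \<ge> 1 \<and> e M \<notin> {0, k - 1}" unfolding M_def using True by (metis (mono_tags, lifting) LeastI)
    have Mmin: "\<And>n. n \<ge> 1 \<Longrightarrow> n < M \<Longrightarrow> e n \<in> {0, k - 1}"
      unfolding M_def using not_less_Least by blast
    have pM: "prep j e (Suc M) = e M" using M by (cases M) auto
    have ex: "\<exists>N\<ge>1. prep j e N \<notin> {0, k - 1}" using pM M by (intro exI[of _ "Suc M"]) auto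
    have L: "(LEAST N. N \<ge> 1 \<and> prep j e N \<notin> {0, k - 1}) = Suc M"
    proof (rule Least_equality)
      show "1 \<le> Suc M \<and> prep j e (Suc M) \<notin> {0, k - 1}" using pM M by auto
      fix y assume y: "1 \<le> y \<and> prep j e y \<notin> {0, k - 1}"
      show "Suc M \<le> y"
      proof (rule ccontr)
        assume "\<not> Suc M \<le> y"
        show False
        proof (cases "y = 1")
          case True then show False using y jS by auto
        next
          case False
          then obtain m where m: "y = Suc (Suc m)" using y by (cases y; cases "y - 1") auto
          have "e (Suc m) \<in> {0, k - 1}" using Mmin[of "Suc m"] \<open>\<not> Suc M \<le> y\<close> m by auto
          then show False using y m by auto
        qed
      qed
    qed
    have sum: "(\<Sum>n\<in>{1..<Suc M}. real (prep j e n) / (real (k - 1) * 2 ^ n))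
       = real j / (real (k - 1) * 2) + (\<Sum>n\<in>{1..<M}. real (e n) / (real (k - 1) * 2 ^ n)) / 2"
    proof -
      have "(\<Sum>n\<in>{1..<Suc M}. real (prep j e n) / (real (k - 1) * 2 ^ n))
          = real (prep j e 1) / (real (k - 1) * 2 ^ 1) + (\<Sum>n\<in>{Suc 1..<Suc M}. real (prep j e n) / (real (k - 1) * 2 ^ n))"
        using M by (subst sum.atLeast_Suc_lessThan) auto
      also have "(\<Sum>n\<in>{Suc 1..<Suc M}. real (prep j e n) / (real (k - 1) * 2 ^ n))
          = (\<Sum>n\<in>{1..<M}. real (prep j e (Suc n)) / (real (k - 1) * 2 ^ Suc n))"
        by (rule sum.shift_bounds_Suc_ivl)
      also have "\<dots> = (\<Sum>n\<in>{1..<M}. real (e n) / (real (k - 1) * 2 ^ n) / 2)"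
        by (rule sum.cong) (auto simp: prep_def)
      also have "\<dots> = (\<Sum>n\<in>{1..<M}. real (e n) / (real (k - 1) * 2 ^ n)) / 2"
        by (simp add: sum_divide_distrib)
      finally show ?thesis by simp
    qed
    define X where "X = (\<Sum>n\<in>{1..<M}. real (e n) / (real (k - 1) * 2 ^ n))"
    have g1: "gval k (prep j e) = real j / (real (k - 1) * 2) + X / 2 + 1 / 2 ^ Suc M"
      unfolding gval_def Let_def L if_P[OF ex] sum X_def by simp
    have g2: "gval k e = X + 1 / 2 ^ M"
      unfolding gval_def Let_def if_P[OF True] M_def[symmetric] X_def by simp
    have "(if j \<notin> {0, k - 1} then 1/2 else (real j / real (k - 1) + gval k e) / 2) = (real j / real (k - 1) + gval k e) / 2"
      using jS by simp
    then show ?thesis unfolding g1 g2 by (simp add: field_simps)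
  next
    case False
    hence eS: "\<forall>n\<ge>1. e n \<in> {0, k - 1}" by auto
    have nex: "\<not> (\<exists>N\<ge>1. prep j e N \<notin> {0, k - 1})"
    proof
      assume "\<exists>N\<ge>1. prep j e N \<notin> {0, k - 1}"
      then obtain N where N: "N \<ge> 1" "prep j e N \<notin> {0, k - 1}" by blast
      show False
      proof (cases "N = 1")
        case True then show False using N jS by auto
      next
        case False
        then obtain m where m: "N = Suc (Suc m)" using N by (cases N; cases "N - 1") auto
        then show False using N eS[rule_format, of "Suc m"] by auto
      qed
    qed
    have s: "summable (\<lambda>n. real (e (Suc n)) / (real (k - 1) * 2 ^ Suc n))" using gsum_props[OF k eS] by blast
    have "(\<lambda>n. (1/2) * (real (e (Suc n)) / (real (k - 1) * 2 ^ Suc n))) sums ((1/2) * (\<Sum>n. real (e (Suc n)) / (real (k - 1) * 2 ^ Suc n)))"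
      by (rule sums_mult[OF summable_sums[OF s]])
    hence "(\<lambda>n. real (prep j e (Suc (Suc n))) / (real (k - 1) * 2 ^ Suc (Suc n))) sums ((1/2) * (\<Sum>n. real (e (Suc n)) / (real (k - 1) * 2 ^ Suc n)))"
      by (simp add: field_simps)
    hence "(\<lambda>n. real (prep j e (Suc n)) / (real (k - 1) * 2 ^ Suc n)) sums ((1/2) * (\<Sum>n. real (e (Suc n)) / (real (k - 1) * 2 ^ Suc n)) + real j / (real (k - 1) * 2))"
      using sums_Suc_iff[where f="\<lambda>n. real (prep j e (Suc n)) / (real (k - 1) * 2 ^ Suc n)"] by simp
    hence "(\<Sum>n. real (prep j e (Suc n)) / (real (k - 1) * 2 ^ Suc n)) = (1/2) * (\<Sum>n. real (e (Suc n)) / (real (k - 1) * 2 ^ Suc n)) + real j / (real (k - 1) * 2)"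
      by (simp add: sums_iff)
    moreover have "gval k (prep j e) = (\<Sum>n. real (prep j e (Suc n)) / (real (k - 1) * 2 ^ Suc n))"
      unfolding gval_def if_not_P[OF nex] ..
    moreover have "gval k e = (\<Sum>n. real (e (Suc n)) / (real (k - 1) * 2 ^ Suc n))"
      unfolding gval_def if_not_P[OF False] ..
    moreover have "(if j \<notin> {0, k - 1} then 1/2 else (real j / real (k - 1) + gval k e) / 2) = (real j / real (k - 1) + gval k e) / 2"
      using jS by simp
    ultimately show ?thesis by (simp add: field_simps)
  qed
qed




lemma half_sum: "(\<Sum>n\<in>{1..<Suc N}. (1/2::real)^n) = 1 - (1/2)^N"
proof (induction N)
  case 0 then show ?case by simp
next
  case (Suc N)
  have "(\<Sum>n\<in>{1..<Suc (Suc N)}. (1/2::real)^n) = (\<Sum>n\<in>{1..<Suc N}. (1/2::real)^n) + (1/2)^(Suc N)"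
    by simp
  also have "\<dots> = 1 - (1/2)^Suc N" unfolding Suc by simp
  finally show ?case .
qed

lemma gval_range:
  assumes k: "k \<ge> 3"
  shows "0 \<le> gval k d \<and> gval k d \<le> 1"
proof (cases "\<exists>N\<ge>1. d N \<notin> {0, k - 1}")
  case True
  define N where "N = (LEAST N. N \<ge> 1 \<and> d N \<notin> {0, k - 1})"
  have N: "N \<ge> 1" unfolding N_def using True by (metis (mono_tags, lifting) LeastI)
  have Nmin: "\<And>n. n \<ge> 1 \<Longrightarrow> n < N \<Longrightarrow> d n \<in> {0, k - 1}"
    unfolding N_def using not_less_Least by blast
  have gv: "gval k d = (\<Sum>n\<in>{1..<N}. real (d n) / (real (k - 1) * 2 ^ n)) + 1 / 2 ^ N"
    unfolding gval_def Let_def if_P[OF True] N_def[symmetric] ..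
  have "(\<Sum>n\<in>{1..<N}. real (d n) / (real (k - 1) * 2 ^ n)) \<le> (\<Sum>n\<in>{1..<N}. (1/2::real)^n)"
    by (rule sum_mono) (use gterm_le[OF k] Nmin in \<open>auto simp: power_divide\<close>)
  moreover have "0 \<le> (\<Sum>n\<in>{1..<N}. real (d n) / (real (k - 1) * 2 ^ n))"
    by (rule sum_nonneg) auto
  moreover obtain N' where N': "N = Suc N'" using N by (cases N) auto
  ultimately have A: "0 \<le> (\<Sum>n\<in>{1..<N}. real (d n) / (real (k - 1) * 2 ^ n))"
    "(\<Sum>n\<in>{1..<N}. real (d n) / (real (k - 1) * 2 ^ n)) \<le> 1 - (1/2)^N'"
    using half_sum[of N'] N' by auto
  have "1 / 2 ^ N = (1/2::real)^N' / 2" using N' by (simp add: power_divide)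
  moreover have "(1/2::real)^N' \<ge> 0" by simp
  ultimately show ?thesis unfolding gv using A by linarith
next
  case False
  hence "\<forall>n\<ge>1. d n \<in> {0, k - 1}" by auto
  then show ?thesis using gsum_props[OF k] unfolding gval_def if_not_P[OF False] by blast
qed

lemma exp_zero: "k \<ge> 2 \<Longrightarrow> is_expansion k (\<lambda>_. 0) 0"
  unfolding is_expansion_def by auto

lemma exp_one: assumes "k \<ge> 2" shows "is_expansion k (\<lambda>_. k - 1) 1"
proof -
  have g: "(\<lambda>n. (real k - 1) / real k * (1 / real k) ^ n) sums ((real k - 1) / real k * (1 / (1 - 1/real k)))"
    using assms by (intro sums_mult geometric_sums) auto
  have "(real k - 1) / real k * (1 / (1 - 1/real k)) = 1" using assms by (simp add: field_simps)
  with g have g1: "(\<lambda>n. (real k - 1) / real k * (1 / real k) ^ n) sums 1" using assms(1) by (simp del: of_nat_Suc)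
  have "(\<lambda>n. real (k - 1) / real k ^ Suc n) = (\<lambda>n. (real k - 1) / real k * (1 / real k) ^ n)"
    using assms by (auto simp: power_divide of_nat_diff)
  with g1 show ?thesis unfolding is_expansion_def using assms by (auto simp: sums_iff)
qed

lemma gval_zero: "k \<ge> 3 \<Longrightarrow> gval k (\<lambda>_. 0) = 0"
  unfolding gval_def by auto

lemma gval_one: assumes "k \<ge> 3" shows "gval k (\<lambda>_. k - 1) = 1"
proof -
  have g: "(\<lambda>n. (1/2) * (1/2::real)^n) sums ((1/2) * (1 / (1 - 1/2)))"
    by (intro sums_mult geometric_sums) auto
  hence g1: "(\<lambda>n. (1/2) * (1/2::real)^n) sums 1" by simp
  have "(\<lambda>n. real (k - 1) / (real (k - 1) * 2 ^ Suc n)) = (\<lambda>n. (1/2) * (1/2::real)^n)"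
    using assms by (auto simp: power_divide)
  with g1 show ?thesis unfolding gval_def by (auto simp: sums_iff)
qed

lemma half_abs: "D = X / 2 \<Longrightarrow> \<bar>X\<bar> \<le> (1/2::real)^m \<Longrightarrow> \<bar>D\<bar> \<le> (1/2)^Suc m"
proof -
  assume h: "D = X / 2" "\<bar>X\<bar> \<le> (1/2::real)^m"
  have "\<bar>D\<bar> = \<bar>X\<bar> / 2" using h by simp
  also have "\<dots> \<le> (1/2)^m / 2" by (rule divide_right_mono) (use h in auto)
  finally show ?thesis by simp
qed

lemma indep_step:
  assumes k: "k \<ge> 3"
    and IH: "\<And>x d e. is_expansion k d x \<Longrightarrow> is_expansion k e x \<Longrightarrow> \<bar>gval k d - gval k e\<bar> \<le> (1/2)^m"
    and d: "is_expansion k d x" and e: "is_expansion k e x" and le: "d 1 \<le> e 1"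
  shows "\<bar>gval k d - gval k e\<bar> \<le> (1/2)^Suc m"
proof -
  have k2: "k \<ge> 2" using k by simp
  define x1 where "x1 = suminf (\<lambda>n. real (sh d (Suc n)) / real k ^ Suc n)"
  define x2 where "x2 = suminf (\<lambda>n. real (sh e (Suc n)) / real k ^ Suc n)"
  have sd: "d 1 < k" "is_expansion k (sh d) x1" "x = (real (d 1) + x1) / real k"
    using exp_split[OF k2 d] unfolding x1_def by auto
  have se: "e 1 < k" "is_expansion k (sh e) x2" "x = (real (e 1) + x2) / real k"
    using exp_split[OF k2 e] unfolding x2_def by auto
  have r1: "0 \<le> x1" "x1 \<le> 1" using exp_range[OF k2 sd(2)] by auto
  have r2: "0 \<le> x2" "x2 \<le> 1" using exp_range[OF k2 se(2)] by auto
  have eq: "real (d 1) + x1 = real (e 1) + x2" using sd(3) se(3) k by (simp add: divide_cancel_right)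
  have gd: "gval k d = (if d 1 \<notin> {0, k - 1} then 1/2 else (real (d 1) / real (k - 1) + gval k (sh d)) / 2)"
    using gval_prep[OF k, of "d 1" "sh d"] unfolding prep_sh .
  have ge: "gval k e = (if e 1 \<notin> {0, k - 1} then 1/2 else (real (e 1) / real (k - 1) + gval k (sh e)) / 2)"
    using gval_prep[OF k, of "e 1" "sh e"] unfolding prep_sh .
  show ?thesis
  proof (cases "d 1 = e 1")
    case True
    hence "x1 = x2" using eq by simp
    hence "\<bar>gval k (sh d) - gval k (sh e)\<bar> \<le> (1/2)^m" using IH sd(2) se(2) by auto
    moreover have "gval k d - gval k e = (gval k (sh d) - gval k (sh e)) / 2 \<or> gval k d - gval k e = 0"
      unfolding gd ge True by (auto simp: field_simps)
    then show ?thesis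
    proof
      assume h: "gval k d - gval k e = (gval k (sh d) - gval k (sh e)) / 2"
      have "\<bar>gval k d - gval k e\<bar> = \<bar>gval k (sh d) - gval k (sh e)\<bar> / 2" unfolding h by simp
      also have "\<dots> \<le> (1/2)^m / 2" by (rule divide_right_mono) (use \<open>\<bar>gval k (sh d) - gval k (sh e)\<bar> \<le> (1/2)^m\<close> in auto)
      finally show ?thesis by simp
    next
      assume "gval k d - gval k e = 0" then show ?thesis by simp
    qed
  next
    case False
    hence lt: "d 1 < e 1" using le by simp
    hence "real (e 1) \<ge> real (d 1) + 1" by simp
    hence e1: "e 1 = Suc (d 1)" "x1 = 1" "x2 = 0" using eq r1 r2 lt by linarith+
    have i1: "\<bar>gval k (sh d) - 1\<bar> \<le> (1/2)^m"
      using IH[OF sd(2)[unfolded e1] exp_one[OF k2]] gval_one[OF k] by simp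
    have i2: "\<bar>gval k (sh e) - 0\<bar> \<le> (1/2)^m"
      using IH[OF se(2)[unfolded e1] exp_zero[OF k2]] gval_zero[OF k] by simp
    show ?thesis
    proof (cases "d 1 \<in> {0, k - 1}")
      case True
      hence d0: "d 1 = 0" using lt se(1) by auto
      hence "e 1 \<notin> {0, k - 1}" using e1 k by auto
      hence "gval k d - gval k e = (gval k (sh d) - 1) / 2" unfolding gd ge using d0 by (simp add: diff_divide_distrib)
      then show ?thesis using i1 by (rule half_abs)
    next
      case False
      show ?thesis
      proof (cases "e 1 \<in> {0, k - 1}")
        case True
        hence "e 1 = k - 1" using lt by auto
        hence "gval k d - gval k e = - (gval k (sh e) - 0) / 2" unfolding gd ge using False k by (simp add: field_simps)
        then show ?thesis using i2 by (intro half_abs[of _ "- (gval k (sh e) - 0)"]) simp_all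
      next
        case F2: False
        show ?thesis unfolding gd ge using False F2 by simp
      qed
    qed
  qed
qed

lemma indep_bound:
  assumes k: "k \<ge> 3"
  shows "is_expansion k d x \<Longrightarrow> is_expansion k e x \<Longrightarrow> \<bar>gval k d - gval k e\<bar> \<le> (1/2)^m"
proof (induction m arbitrary: x d e)
  case 0
  then show ?case using gval_range[OF k, of d] gval_range[OF k, of e] by auto
next
  case (Suc m)
  show ?case
  proof (cases "d 1 \<le> e 1")
    case True show ?thesis by (rule indep_step[OF k _ Suc.prems True], rule Suc.IH, assumption+)
  next
    case False
    hence "e 1 \<le> d 1" by simp
    have "\<bar>gval k e - gval k d\<bar> \<le> (1/2)^Suc m"
      by (rule indep_step[OF k _ Suc.prems(2,1) \<open>e 1 \<le> d 1\<close>], rule Suc.IH, assumption+)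
    then show ?thesis by (simp add: abs_minus_commute)
  qed
qed

lemma indep:
  assumes k: "k \<ge> 3" and "is_expansion k d x" "is_expansion k e x"
  shows "gval k d = gval k e"
proof (rule ccontr)
  assume "gval k d \<noteq> gval k e"
  hence p: "\<bar>gval k d - gval k e\<bar> > 0" by simp
  obtain m where "(1/2::real)^m < \<bar>gval k d - gval k e\<bar>"
    using real_arch_pow_inv[OF p, of "1/2"] by auto
  with indep_bound[OF k assms(2,3), of m] show False by simp
qed




lemma T_range: "0 \<le> T m y \<and> T m y < 1"
  unfolding T_def by linarith

lemma T_eq: "real j \<le> real m * y \<Longrightarrow> real m * y < real j + 1 \<Longrightarrow> T m y = real m * y - real j"
  unfolding T_def by (subst floor_unique[of "int j"]) auto

lemma greedy:
  assumes k: "k \<ge> 2" and x: "0 \<le> x" "x < 1"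
  defines "t \<equiv> \<lambda>n. (T k ^^ n) x"
  defines "dd \<equiv> \<lambda>n. if n = 0 then 0 else nat \<lfloor>real k * t (n - 1)\<rfloor>"
  shows "is_expansion k dd x"
proof -
  have t0: "\<And>n. 0 \<le> t n \<and> t n < 1"
  proof -
    fix n show "0 \<le> t n \<and> t n < 1" using x T_range unfolding t_def by (cases n) auto
  qed
  have tS: "t (Suc n) = real k * t n - real (dd (Suc n))" for n
  proof -
    have "\<lfloor>real k * t n\<rfloor> \<ge> 0" using t0[of n] by simp
    hence "real (dd (Suc n)) = of_int \<lfloor>real k * t n\<rfloor>" unfolding dd_def by simp
    thus ?thesis unfolding t_def T_def by simp
  qed
  have dk: "dd n < k" if h: "n \<ge> 1" for n
  proof -
    obtain m where m: "n = Suc m" using h by (cases n) auto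
    have "real k * t m < real k" using t0[of m] k by simp
    hence "\<lfloor>real k * t m\<rfloor> < int k" by (simp add: floor_less_iff)
    moreover have "\<lfloor>real k * t m\<rfloor> \<ge> 0" using t0[of m] by simp
    ultimately show ?thesis unfolding dd_def m by (simp add: nat_less_iff)
  qed
  have part: "x = (\<Sum>n<N. real (dd (Suc n)) / real k ^ Suc n) + t N / real k ^ N" for N
  proof (induction N)
    case 0 then show ?case unfolding t_def by simp
  next
    case (Suc N)
    have "t N / real k ^ N = real (dd (Suc N)) / real k ^ Suc N + t (Suc N) / real k ^ Suc N"
      unfolding tS using k by (simp add: field_simps)
    then show ?case using Suc by simp
  qed
  have lim0: "(\<lambda>N. t N / real k ^ N) \<longlonglongrightarrow> 0"
  proof (rule tendsto_sandwich[where f="\<lambda>_. 0" and h="\<lambda>N. (1 / real k) ^ N"])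
    show "\<forall>\<^sub>F N in sequentially. 0 \<le> t N / real k ^ N" using t0 by auto
    show "\<forall>\<^sub>F N in sequentially. t N / real k ^ N \<le> (1 / real k) ^ N"
    proof (rule always_eventually, rule allI)
      fix N
      have "t N / real k ^ N \<le> 1 / real k ^ N" using t0[of N] k by (intro divide_right_mono) auto
      thus "t N / real k ^ N \<le> (1 / real k) ^ N" by (simp add: power_divide)
    qed
    show "(\<lambda>N. (1 / real k) ^ N) \<longlonglongrightarrow> 0" using k by (intro LIMSEQ_power_zero) auto
  qed auto
  have "(\<lambda>N. x - t N / real k ^ N) \<longlonglongrightarrow> x - 0" by (intro tendsto_diff lim0) auto
  moreover have "(\<lambda>N. x - t N / real k ^ N) = (\<lambda>N. \<Sum>n<N. real (dd (Suc n)) / real k ^ Suc n)"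
    using part by (metis (no_types, lifting) add_diff_cancel_right')
  ultimately have "(\<lambda>n. real (dd (Suc n)) / real k ^ Suc n) sums x"
    unfolding sums_def by simp
  thus ?thesis unfolding is_expansion_def using dk by (simp add: sums_iff)
qed

lemma exist_exp:
  assumes "k \<ge> 2" "0 \<le> x" "x \<le> 1"
  shows "\<exists>d. is_expansion k d x"
proof (cases "x = 1")
  case True then show ?thesis using exp_one[OF assms(1)] by blast
next
  case False then show ?thesis using greedy[OF assms(1,2)] assms by fastforce
qed

lemma g_eq:
  assumes k: "k \<ge> 3" and d: "is_expansion k d x"
  shows "g k x = gval k d"
proof -
  have "0 \<le> x" "x \<le> 1" using exp_range[OF _ d] k by auto
  then obtain e where "is_expansion k e x" using exist_exp k by fastforce
  hence "is_expansion k (SOME d. is_expansion k d x) x" using someI_ex[of "\<lambda>d. is_expansion k d x"] by blast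
  thus ?thesis unfolding g_def using indep[OF k _ d] by blast
qed

lemma g_rec:
  assumes k: "k \<ge> 3" and y: "0 \<le> y" "y \<le> 1" and j: "j < k"
  shows "g k ((real j + y) / real k) = (if j \<notin> {0, k - 1} then 1/2 else (real j / real (k - 1) + g k y) / 2)"
proof -
  obtain e where e: "is_expansion k e y" using exist_exp[of k y] k y by auto
  have "is_expansion k (prep j e) ((real j + y) / real k)" using exp_prep[OF _ e j] k by auto
  hence "g k ((real j + y) / real k) = gval k (prep j e)" using g_eq k by blast
  also have "\<dots> = (if j \<notin> {0, k - 1} then 1/2 else (real j / real (k - 1) + gval k e) / 2)"
    by (rule gval_prep[OF k])
  finally show ?thesis using g_eq[OF k e] by simp
qed

lemma g_range: "k \<ge> 3 \<Longrightarrow> 0 \<le> x \<Longrightarrow> x \<le> 1 \<Longrightarrow> 0 \<le> g k x \<and> g k x \<le> 1"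
  using exist_exp[of k x] g_eq gval_range by fastforce

lemma g_0: "k \<ge> 3 \<Longrightarrow> g k 0 = 0"
  using g_eq[OF _ exp_zero] gval_zero by simp

lemma g_1: "k \<ge> 3 \<Longrightarrow> g k 1 = 1"
  using g_eq[OF _ exp_one] gval_one by simp

lemma R1:
  assumes k: "k \<ge> 3" and x: "0 \<le> x" "x \<le> 1 / real k"
  shows "g k x = g k (real k * x) / 2"
proof -
  have "real k * x \<le> 1" using x k by (simp add: field_simps)
  hence "g k ((real 0 + real k * x) / real k) = (real 0 / real (k - 1) + g k (real k * x)) / 2"
    using g_rec[OF k, of "real k * x" 0] x k by simp
  thus ?thesis using k by simp
qed

lemma R2:
  assumes k: "k \<ge> 3" and x: "(real k - 1) / real k \<le> x" "x \<le> 1"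
  shows "g k x = 1/2 + g k (real k * x - (real k - 1)) / 2"
proof -
  have kp: "real k > 0" using k by simp
  have "real k - 1 \<le> real k * x" using x kp by (simp add: field_simps)
  moreover have "real k * x \<le> real k" using x kp by simp
  ultimately have y: "0 \<le> real k * x - (real k - 1)" "real k * x - (real k - 1) \<le> 1" by auto
  have rk: "real (k - 1) = real k - 1" using k by (simp add: of_nat_diff)
  have "g k ((real (k - 1) + (real k * x - (real k - 1))) / real k)
      = (real (k - 1) / real (k - 1) + g k (real k * x - (real k - 1))) / 2"
    using g_rec[OF k y, of "k - 1"] k by simp
  moreover have "(real (k - 1) + (real k * x - (real k - 1))) / real k = x" using kp rk by simp
  moreover have "real (k - 1) / real (k - 1) = 1" using k by simp
  ultimately show ?thesis by simp
qed

lemma R0: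
  assumes k: "k \<ge> 3" and x: "1 / real k \<le> x" "x \<le> (real k - 1) / real k"
  shows "g k x = 1/2"
proof -
  have kp: "real k > 0" using k by simp
  have lo: "1 \<le> real k * x" using x kp by (simp add: field_simps)
  have hi: "real k * x \<le> real k - 1" using x kp by (simp add: field_simps)
  define j where "j = min (nat \<lfloor>real k * x\<rfloor>) (k - 2)"
  have f1: "1 \<le> \<lfloor>real k * x\<rfloor>" using lo by (simp add: le_floor_iff)
  have "1 \<le> nat \<lfloor>real k * x\<rfloor>" using f1 by (subst le_nat_iff) auto
  hence j1: "1 \<le> j" using k unfolding j_def by auto
  have j2: "j \<le> k - 2" unfolding j_def by simp
  have jle: "real j \<le> real k * x"
    unfolding j_def using f1 by (smt (verit) floor_le_iff le_floor_iff min_def nat_le_iff of_nat_le_iff int_ops(1) of_int_of_nat_eq of_nat_nat)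
  have jhi: "real k * x \<le> real j + 1"
  proof (cases "nat \<lfloor>real k * x\<rfloor> \<le> k - 2")
    case True
    hence "j = nat \<lfloor>real k * x\<rfloor>" unfolding j_def by simp
    thus ?thesis using f1 by linarith
  next
    case False
    hence "j = k - 2" unfolding j_def by simp
    hence "real j = real k - 2" using k by (simp add: of_nat_diff)
    thus ?thesis using hi by simp
  qed
  have "g k ((real j + (real k * x - real j)) / real k) = 1/2"
    using g_rec[OF k, of "real k * x - real j" j] jle jhi j1 j2 k by auto
  thus ?thesis using kp by simp
qed




lemma g_le_half:
  assumes k: "k \<ge> 3" and x: "0 \<le> x" "x \<le> (real k - 1) / real k"
  shows "g k x \<le> 1/2"
proof (cases "x \<le> 1 / real k")
  case True
  have "real k * x \<le> 1" using True k by (simp add: field_simps)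
  hence "g k (real k * x) \<le> 1" using g_range[OF k] x k by simp
  then show ?thesis using R1[OF k x(1) True] by simp
next
  case False then show ?thesis using R0[OF k _ x(2)] by simp
qed

lemma g_ge_half:
  assumes k: "k \<ge> 3" and x: "1 / real k \<le> x" "x \<le> 1"
  shows "g k x \<ge> 1/2"
proof (cases "x \<ge> (real k - 1) / real k")
  case True
  have "0 \<le> real k * x - (real k - 1)" using True k by (simp add: field_simps)
  moreover have "real k * x - (real k - 1) \<le> 1" using x k by simp
  ultimately have "g k (real k * x - (real k - 1)) \<ge> 0" using g_range[OF k] by simp
  then show ?thesis using R2[OF k True x(2)] by simp
next
  case False then show ?thesis using R0[OF k x(1)] by simp
qed

lemma mono_bound:
  assumes k: "k \<ge> 3"
  shows "0 \<le> x \<Longrightarrow> x \<le> y \<Longrightarrow> y \<le> 1 \<Longrightarrow> g k x - g k y \<le> (1/2)^m"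
proof (induction m arbitrary: x y)
  case 0 then show ?case using g_range[OF k, of x] g_range[OF k, of y] by simp
next
  case (Suc m)
  have kp: "real k > 0" using k by simp
  show ?case
  proof (cases "y \<le> 1 / real k")
    case True
    have "real k * y \<le> 1" using True kp by (simp add: field_simps)
    moreover have "real k * x \<le> real k * y" "0 \<le> real k * x" using Suc.prems kp by auto
    ultimately have "g k (real k * x) - g k (real k * y) \<le> (1/2)^m" using Suc.IH by blast
    moreover have "g k x = g k (real k * x) / 2" using R1[OF k] Suc.prems True by simp
    moreover have "g k y = g k (real k * y) / 2" using R1[OF k] Suc.prems True by simp
    ultimately show ?thesis by simp
  next
    case F1: False
    show ?thesis
    proof (cases "x \<ge> (real k - 1) / real k")
      case True
      have "0 \<le> real k * x - (real k - 1)" using True kp by (simp add: field_simps)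
      moreover have "real k * x - (real k - 1) \<le> real k * y - (real k - 1)" using Suc.prems kp by auto
      moreover have "real k * y - (real k - 1) \<le> 1" using Suc.prems kp by auto
      ultimately have "g k (real k * x - (real k - 1)) - g k (real k * y - (real k - 1)) \<le> (1/2)^m"
        using Suc.IH by blast
      moreover have "g k x = 1/2 + g k (real k * x - (real k - 1)) / 2" using R2[OF k True] Suc.prems by simp
      moreover have "g k y = 1/2 + g k (real k * y - (real k - 1)) / 2" using R2[OF k] True Suc.prems by simp
      ultimately show ?thesis by simp
    next
      case False
      have "g k x \<le> 1/2" using g_le_half[OF k] Suc.prems False by simp
      moreover have "g k y \<ge> 1/2" using g_ge_half[OF k] Suc.prems F1 by simp
      ultimately show ?thesis by (smt (verit) zero_le_power zero_le_divide_1_iff)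
    qed
  qed
qed

lemma g_mono:
  assumes k: "k \<ge> 3" and "0 \<le> x" "x \<le> y" "y \<le> 1"
  shows "g k x \<le> g k y"
proof (rule ccontr)
  assume "\<not> g k x \<le> g k y"
  hence p: "g k x - g k y > 0" by simp
  obtain m where "(1/2::real)^m < g k x - g k y" using real_arch_pow_inv[OF p, of "1/2"] by auto
  with mono_bound[OF k assms(2-4), of m] show False by simp
qed

lemma lt1_bound:
  assumes k: "k \<ge> 3"
  shows "0 \<le> y \<Longrightarrow> y \<le> 1 - (1 / real k) ^ m \<Longrightarrow> g k y \<le> 1 - (1/2)^Suc m"
proof (induction m arbitrary: y)
  case 0 then show ?case using g_0[OF k] by simp
next
  case (Suc m)
  have kp: "real k > 1" using k by simp
  show ?case
  proof (cases "y \<le> (real k - 1) / real k")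
    case True
    have "(1/2::real)^Suc m \<le> 1" by (rule power_le_one) auto
    hence "(1/2::real)^Suc (Suc m) \<le> 1/2" by simp
    then show ?thesis using g_le_half[OF k Suc.prems(1) True] by simp
  next
    case False
    have "(1 / real k) ^ Suc m \<ge> 0" using kp by simp
    hence y1: "y \<le> 1" using Suc.prems(2) by linarith
    have "real k * y - (real k - 1) \<le> real k * (1 - (1 / real k) ^ Suc m) - (real k - 1)"
      using Suc.prems(2) kp by simp
    also have "\<dots> = 1 - (1 / real k) ^ m" using kp by (simp add: field_simps)
    finally have a: "real k * y - (real k - 1) \<le> 1 - (1 / real k) ^ m" .
    have b: "0 \<le> real k * y - (real k - 1)" using False kp by (simp add: field_simps)
    have "g k (real k * y - (real k - 1)) \<le> 1 - (1/2)^Suc m" using Suc.IH[OF b a] .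
    moreover have "g k y = 1/2 + g k (real k * y - (real k - 1)) / 2" using R2[OF k _ y1] False by simp
    ultimately show ?thesis by simp
  qed
qed

lemma g_lt1:
  assumes k: "k \<ge> 3" and "0 \<le> y" "y < 1"
  shows "g k y < 1"
proof -
  have p: "1 - y > 0" using assms by simp
  obtain m where m: "(1 / real k)^m < 1 - y" using real_arch_pow_inv[OF p, of "1/real k"] k by auto
  have "g k y \<le> 1 - (1/2)^Suc m" using lt1_bound[OF k assms(2)] m by simp
  moreover have "(1/2::real)^Suc m > 0" by simp
  ultimately show ?thesis by linarith
qed

lemma gt0_bound:
  assumes k: "k \<ge> 3"
  shows "y \<le> 1 \<Longrightarrow> (1 / real k) ^ m \<le> y \<Longrightarrow> g k y \<ge> (1/2)^Suc m"
proof (induction m arbitrary: y)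
  case 0 then show ?case using g_1[OF k] by simp
next
  case (Suc m)
  have kp: "real k > 1" using k by simp
  show ?case
  proof (cases "y \<ge> 1 / real k")
    case True
    have "(1/2::real)^Suc m \<le> 1" by (rule power_le_one) auto
    hence "(1/2::real)^Suc (Suc m) \<le> 1/2" by simp
    then show ?thesis using g_ge_half[OF k True Suc.prems(1)] by simp
  next
    case False
    have "(1 / real k) ^ Suc m \<ge> 0" using kp by simp
    hence y0: "0 \<le> y" using Suc.prems(2) by linarith
    have a: "(1 / real k) ^ m \<le> real k * y"
    proof -
      have "(1 / real k) ^ m = real k * (1 / real k) ^ Suc m" using kp by simp
      also have "\<dots> \<le> real k * y" using Suc.prems(2) kp by (intro mult_left_mono) auto
      finally show ?thesis .
    qed
    have b: "real k * y \<le> 1" using False kp by (simp add: field_simps)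
    have "g k (real k * y) \<ge> (1/2)^Suc m" using Suc.IH[OF b a] .
    moreover have "g k y = g k (real k * y) / 2" using R1[OF k y0] False by simp
    ultimately show ?thesis by simp
  qed
qed

lemma g_gt0:
  assumes k: "k \<ge> 3" and "0 < y" "y \<le> 1"
  shows "g k y > 0"
proof -
  obtain m where m: "(1 / real k)^m < y" using real_arch_pow_inv[OF assms(2), of "1/real k"] k by auto
  have "g k y \<ge> (1/2)^Suc m" using gt0_bound[OF k assms(3)] m by simp
  moreover have "(1/2::real)^Suc m > 0" by simp
  ultimately show ?thesis by linarith
qed




definition outer :: "nat \<Rightarrow> real \<Rightarrow> bool" where
  "outer k y \<longleftrightarrow> (0 \<le> y \<and> y < 1 / real k) \<or> ((real k - 1) / real k < y \<and> y < 1)"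

lemma outer_range: assumes "k \<ge> 3" "outer k y" shows "0 \<le> y \<and> y < 1"
proof -
  have "1 / real k < 1" "0 < (real k - 1) / real k" using assms(1) by auto
  thus ?thesis using assms(2) unfolding outer_def by auto
qed

lemma T_low: assumes k: "k \<ge> 3" and "0 \<le> y" "y < 1 / real k" shows "T k y = real k * y"
proof -
  have "real k * y < 1" using assms by (simp add: field_simps)
  thus ?thesis using T_eq[of 0 k y] assms k by simp
qed

lemma T_high: assumes k: "k \<ge> 3" and "(real k - 1) / real k < y" "y < 1"
  shows "T k y = real k * y - (real k - 1)"
proof -
  have kp: "real k > 0" using k by simp
  have "real k - 1 < real k * y" using assms kp by (simp add: field_simps)
  moreover have "real k * y < real k" using assms kp by simp
  moreover have rk: "real (k - 1) = real k - 1" using k by (simp add: of_nat_diff)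
  ultimately show ?thesis using T_eq[of "k - 1" k y] by simp
qed

lemma T2_low: "0 \<le> u \<Longrightarrow> u < 1/2 \<Longrightarrow> T 2 u = 2 * u"
  using T_eq[of 0 2 u] by simp

lemma T2_high: "1/2 \<le> u \<Longrightarrow> u < 1 \<Longrightarrow> T 2 u = 2 * u - 1"
  using T_eq[of 1 2 u] by simp

lemma sep_a:
  assumes k: "k \<ge> 3" and H: "\<forall>m. outer k ((T k ^^ m) y0) \<and> g k ((T k ^^ m) y0) \<noteq> 1/2"
    and a: "0 \<le> a" "a < y0"
  shows "g k a < g k y0"
proof (rule ccontr)
  assume "\<not> g k a < g k y0"
  moreover have "y0 < 1" using H[rule_format, of 0] outer_range[OF k] by auto
  ultimately have eq: "g k a = g k y0" using g_mono[OF k a(1), of y0] a by linarith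
  have kp: "real k > 1" using k by simp
  let ?Y = "\<lambda>m. (T k ^^ m) y0"
  have claim: "\<exists>a'. 0 \<le> a' \<and> a' < ?Y m \<and> g k a' = g k (?Y m) \<and> ?Y m - a' = real k ^ m * (y0 - a)" for m
  proof (induction m)
    case 0 then show ?case using a eq by (intro exI[of _ a]) auto
  next
    case (Suc m)
    then obtain a' where a': "0 \<le> a'" "a' < ?Y m" "g k a' = g k (?Y m)" "?Y m - a' = real k ^ m * (y0 - a)" by blast
    have YS: "?Y (Suc m) = T k (?Y m)" by simp
    have o: "outer k (?Y m)" and h: "g k (?Y m) \<noteq> 1/2" using H by auto
    show ?case
    proof (cases "?Y m < 1 / real k")
      case True
      have y0': "0 \<le> ?Y m" using o outer_range[OF k] by auto
      have TY: "?Y (Suc m) = real k * ?Y m" using YS T_low[OF k y0' True] by simp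
      have g1: "g k a' = g k (real k * a') / 2" using R1[OF k a'(1)] a'(2) True by simp
      have g2: "g k (?Y m) = g k (real k * ?Y m) / 2" using R1[OF k y0'] True by simp
      show ?thesis
      proof (intro exI[of _ "real k * a'"] conjI)
        show "0 \<le> real k * a'" using a' kp by simp
        show "real k * a' < ?Y (Suc m)" using TY a' kp by simp
        show "g k (real k * a') = g k (?Y (Suc m))" using TY g1 g2 a'(3) by simp
        have "?Y (Suc m) - real k * a' = real k * (?Y m - a')" using TY by (simp add: algebra_simps)
        then show "?Y (Suc m) - real k * a' = real k ^ Suc m * (y0 - a)"
          using a'(4) by simp
      qed
    next
      case False
      hence hi: "(real k - 1) / real k < ?Y m" "?Y m < 1" using o unfolding outer_def by auto
      have TY: "?Y (Suc m) = real k * ?Y m - (real k - 1)" using YS T_high[OF k hi] by simp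
      show ?thesis
      proof (cases "a' \<ge> (real k - 1) / real k")
        case True
        have g1: "g k a' = 1/2 + g k (real k * a' - (real k - 1)) / 2" using R2[OF k True] a' hi by simp
        have g2: "g k (?Y m) = 1/2 + g k (real k * ?Y m - (real k - 1)) / 2" using R2[OF k] hi by simp
        show ?thesis
        proof (intro exI[of _ "real k * a' - (real k - 1)"] conjI)
          show "0 \<le> real k * a' - (real k - 1)" using True kp by (simp add: field_simps)
          show "real k * a' - (real k - 1) < ?Y (Suc m)" using TY a' kp by simp
          show "g k (real k * a' - (real k - 1)) = g k (?Y (Suc m))" using TY g1 g2 a'(3) by simp
          have "?Y (Suc m) - (real k * a' - (real k - 1)) = real k * (?Y m - a')" using TY by (simp add: algebra_simps)
          then show "?Y (Suc m) - (real k * a' - (real k - 1)) = real k ^ Suc m * (y0 - a)"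
            using a'(4) by simp
        qed
      next
        case False
        have "g k a' \<le> 1/2" using g_le_half[OF k a'(1)] False by simp
        moreover have "1 / real k \<le> (real k - 1) / real k" using k by (intro divide_right_mono) auto
        hence "g k (?Y m) \<ge> 1/2" using g_ge_half[OF k, of "?Y m"] hi by linarith
        ultimately show ?thesis using a'(3) h by simp
      qed
    qed
  qed
  have p: "y0 - a > 0" using a by simp
  obtain m where m: "1 / (y0 - a) < real k ^ m" using real_arch_pow[OF kp] by blast
  then have "1 < real k ^ m * (y0 - a)" using p by (simp add: field_simps)
  moreover obtain a' where "0 \<le> a'" "a' < ?Y m" "?Y m - a' = real k ^ m * (y0 - a)" using claim[of m] by blast
  moreover have "?Y m < 1" using H outer_range[OF k] by auto
  ultimately show False by linarith
qed




lemma sep_b: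
  assumes k: "k \<ge> 3" and H: "\<forall>m. outer k ((T k ^^ m) y0) \<and> g k ((T k ^^ m) y0) \<noteq> 1/2"
    and b: "b \<le> 1" "y0 < b"
  shows "g k y0 < g k b"
proof (rule ccontr)
  assume "\<not> g k y0 < g k b"
  moreover have "0 \<le> y0" using H[rule_format, of 0] outer_range[OF k] by auto
  ultimately have eq: "g k b = g k y0" using g_mono[OF k _ _ b(1), of y0] b by linarith
  have kp: "real k > 1" using k by simp
  let ?Y = "\<lambda>m. (T k ^^ m) y0"
  have claim: "\<exists>b'. b' \<le> 1 \<and> ?Y m < b' \<and> g k b' = g k (?Y m) \<and> b' - ?Y m = real k ^ m * (b - y0)" for m
  proof (induction m)
    case 0 then show ?case using b eq by (intro exI[of _ b]) auto
  next
    case (Suc m)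
    then obtain b' where b': "b' \<le> 1" "?Y m < b'" "g k b' = g k (?Y m)" "b' - ?Y m = real k ^ m * (b - y0)" by blast
    have YS: "?Y (Suc m) = T k (?Y m)" by simp
    have o: "outer k (?Y m)" and h: "g k (?Y m) \<noteq> 1/2" using H by auto
    have r: "0 \<le> ?Y m" "?Y m < 1" using o outer_range[OF k] by auto
    show ?case
    proof (cases "?Y m < 1 / real k")
      case True
      have TY: "?Y (Suc m) = real k * ?Y m" using YS T_low[OF k r(1) True] by simp
      show ?thesis
      proof (cases "b' \<le> 1 / real k")
        case True2: True
        have g1: "g k b' = g k (real k * b') / 2" using R1[OF k _ True2] r b' by simp
        have g2: "g k (?Y m) = g k (real k * ?Y m) / 2" using R1[OF k r(1)] True by simp
        show ?thesis
        proof (intro exI[of _ "real k * b'"] conjI)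
          show "real k * b' \<le> 1" using True2 kp by (simp add: field_simps)
          show "?Y (Suc m) < real k * b'" using TY b' kp by simp
          show "g k (real k * b') = g k (?Y (Suc m))" using TY g1 g2 b'(3) by simp
          have "real k * b' - ?Y (Suc m) = real k * (b' - ?Y m)" using TY by (simp add: algebra_simps)
          then show "real k * b' - ?Y (Suc m) = real k ^ Suc m * (b - y0)"
            using b'(4) by simp
        qed
      next
        case False
        have "g k b' \<ge> 1/2" using g_ge_half[OF k _ b'(1)] False by simp
        moreover have "1 / real k \<le> (real k - 1) / real k" using k by (intro divide_right_mono) auto
        hence "g k (?Y m) \<le> 1/2" using g_le_half[OF k r(1)] True by linarith
        ultimately show ?thesis using b'(3) h by simp
      qed
    next
      case False
      hence hi: "(real k - 1) / real k < ?Y m" "?Y m < 1" using o unfolding outer_def by auto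
      have TY: "?Y (Suc m) = real k * ?Y m - (real k - 1)" using YS T_high[OF k hi] by simp
      have g1: "g k b' = 1/2 + g k (real k * b' - (real k - 1)) / 2" using R2[OF k _ b'(1)] b' hi by simp
      have g2: "g k (?Y m) = 1/2 + g k (real k * ?Y m - (real k - 1)) / 2" using R2[OF k] hi by simp
      show ?thesis
      proof (intro exI[of _ "real k * b' - (real k - 1)"] conjI)
        show "real k * b' - (real k - 1) \<le> 1" using b'(1) kp by simp
        show "?Y (Suc m) < real k * b' - (real k - 1)" using TY b' kp by simp
        show "g k (real k * b' - (real k - 1)) = g k (?Y (Suc m))" using TY g1 g2 b'(3) by simp
        have "(real k * b' - (real k - 1)) - ?Y (Suc m) = real k * (b' - ?Y m)" using TY by (simp add: algebra_simps)
        then show "(real k * b' - (real k - 1)) - ?Y (Suc m) = real k ^ Suc m * (b - y0)"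
          using b'(4) by simp
      qed
    qed
  qed
  have p: "b - y0 > 0" using b by simp
  obtain m where m: "1 / (b - y0) < real k ^ m" using real_arch_pow[OF kp] by blast
  then have "1 < real k ^ m * (b - y0)" using p by (simp add: field_simps)
  moreover obtain b' where "b' \<le> 1" "?Y m < b'" "b' - ?Y m = real k ^ m * (b - y0)" using claim[of m] by blast
  moreover have "0 \<le> ?Y m" using H outer_range[OF k] by auto
  ultimately show False by linarith
qed




locale abctx =
  fixes k :: nat and a b :: real
  assumes k: "k \<ge> 3" and a0: "0 \<le> a" and a1: "a < 1 / real k"
    and b0: "(real k - 1) / real k < b" and b1: "b \<le> 1"
begin

lemma kp: "real k > 1" using k by simp

lemma a_le1: "a \<le> 1"
proof -
  have "1 / real k < 1" using kp by simp
  thus ?thesis using a1 by simp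
qed

lemma b_ge0: "0 \<le> b"
proof -
  have "0 \<le> (real k - 1) / real k" using kp by simp
  thus ?thesis using b0 by simp
qed

lemma ga: "g k a < 1/2"
proof -
  have "real k * a < 1" using a1 kp by (simp add: field_simps)
  hence "g k (real k * a) < 1" using g_lt1[OF k] a0 kp by simp
  thus ?thesis using R1[OF k a0] a1 by simp
qed

lemma gb: "g k b > 1/2"
proof -
  have "0 < real k * b - (real k - 1)" using b0 kp by (simp add: field_simps)
  moreover have "real k * b - (real k - 1) \<le> 1" using b1 kp by simp
  ultimately have "g k (real k * b - (real k - 1)) > 0" using g_gt0[OF k] by simp
  thus ?thesis using R2[OF k _ b1] b0 by simp
qed

lemma not_mid:
  assumes "0 \<le> y" "y < 1" "g k y \<noteq> 1/2" shows "outer k y"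
proof (cases "y < 1 / real k")
  case True then show ?thesis unfolding outer_def using assms by simp
next
  case False
  show ?thesis
  proof (cases "(real k - 1) / real k < y")
    case True then show ?thesis unfolding outer_def using assms by simp
  next
    case F2: False
    have "g k y = 1/2" using R0[OF k] False F2 by simp
    then show ?thesis using assms by simp
  qed
qed

lemma u_props:
  assumes "g k x \<in> W 2 (g k a) (g k b)"
  shows "0 \<le> (T 2 ^^ n) (g k x) \<and> (T 2 ^^ n) (g k x) < 1 \<and> (T 2 ^^ n) (g k x) \<noteq> 1/2
    \<and> (T 2 ^^ n) (g k x) \<notin> {g k a<..<g k b}"
proof -
  have "0 \<le> (T 2 ^^ n) (g k x) \<and> (T 2 ^^ n) (g k x) < 1"
    using assms T_range unfolding W_def by (cases n) auto
  moreover have "(T 2 ^^ n) (g k x) \<notin> {g k a<..<g k b}" using assms unfolding W_def by auto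
  ultimately show ?thesis using ga gb by auto
qed

lemma orb:
  assumes x: "0 \<le> x" "x \<le> 1" "g k x \<in> W 2 (g k a) (g k b)"
  shows "outer k ((T k ^^ m) x) \<and> g k ((T k ^^ m) x) = (T 2 ^^ m) (g k x)"
proof (induction m)
  case 0
  have "x \<noteq> 1" using x(3) g_1[OF k] unfolding W_def by auto
  hence "x < 1" using x by simp
  then show ?case using not_mid[OF x(1)] u_props[OF x(3), of 0] by simp
next
  case (Suc m)
  let ?y = "(T k ^^ m) x"
  let ?u = "(T 2 ^^ m) (g k x)"
  have o: "outer k ?y" and gy: "g k ?y = ?u" using Suc by auto
  have r: "0 \<le> ?y" "?y < 1" using o outer_range[OF k] by auto
  have up: "0 \<le> ?u" "?u < 1" "?u \<noteq> 1/2" using u_props[OF x(3), of m] by auto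
  have eq: "g k ((T k ^^ Suc m) x) = (T 2 ^^ Suc m) (g k x)"
  proof (cases "?y < 1 / real k")
    case True
    have TY: "(T k ^^ Suc m) x = real k * ?y" using T_low[OF k r(1) True] by simp
    have g1: "g k ?y = g k (real k * ?y) / 2" using R1[OF k r(1)] True by simp
    have "real k * ?y \<le> 1" using True kp by (simp add: field_simps)
    hence "g k (real k * ?y) \<le> 1" using g_range[OF k] r kp by simp
    hence "?u < 1/2" using g1 gy up by simp
    hence "T 2 ?u = 2 * ?u" using T2_low up by simp
    then show ?thesis using TY g1 gy by simp
  next
    case False
    hence hi: "(real k - 1) / real k < ?y" using o unfolding outer_def by auto
    have TY: "(T k ^^ Suc m) x = real k * ?y - (real k - 1)" using T_high[OF k hi r(2)] by simp
    have g2: "g k ?y = 1/2 + g k (real k * ?y - (real k - 1)) / 2" using R2[OF k _ ] hi r by simp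
    have "0 \<le> real k * ?y - (real k - 1)" "real k * ?y - (real k - 1) \<le> 1" using hi r kp by (auto simp: field_simps)
    hence "g k (real k * ?y - (real k - 1)) \<ge> 0" using g_range[OF k] by simp
    hence "?u \<ge> 1/2" using g2 gy by simp
    hence "T 2 ?u = 2 * ?u - 1" using T2_high up by simp
    then show ?thesis using TY g2 gy by simp
  qed
  have "0 \<le> (T k ^^ Suc m) x" "(T k ^^ Suc m) x < 1" using T_range by auto
  moreover have "g k ((T k ^^ Suc m) x) \<noteq> 1/2" using eq u_props[OF x(3), of "Suc m"] by simp
  ultimately show ?case using not_mid eq by blast
qed

lemma part_c2:
  assumes xg: "x \<in> g_preimage k (W 2 (g k a) (g k b))"
  shows "x \<in> W k a b"
proof -
  have x: "0 \<le> x" "x \<le> 1" "g k x \<in> W 2 (g k a) (g k b)" using xg unfolding g_preimage_def by auto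
  have x1: "x < 1" using orb[OF x, of 0] outer_range[OF k] by auto
  have "(T k ^^ n) x \<notin> {a<..<b}" for n
  proof
    assume in_ab: "(T k ^^ n) x \<in> {a<..<b}"
    let ?y0 = "(T k ^^ n) x"
    have sh: "(T k ^^ m) ?y0 = (T k ^^ (m + n)) x" for m by (simp add: funpow_add)
    have H: "\<forall>m. outer k ((T k ^^ m) ?y0) \<and> g k ((T k ^^ m) ?y0) \<noteq> 1/2"
      unfolding sh using orb[OF x] u_props[OF x(3)] by auto
    have "g k a < g k ?y0" using sep_a[OF k H a0] in_ab by auto
    moreover have "g k ?y0 < g k b" using sep_b[OF k H b1] in_ab by auto
    moreover have "g k ?y0 = (T 2 ^^ n) (g k x)" using orb[OF x] by blast
    ultimately show False using u_props[OF x(3), of n] by auto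
  qed
  then show ?thesis unfolding W_def using x x1 by auto
qed

lemma int_orbit: "\<exists>z::int. (T k ^^ n) x = real k ^ n * x - of_int z"
proof (induction n)
  case 0 then show ?case by (intro exI[of _ 0]) simp
next
  case (Suc n)
  then obtain z where z: "(T k ^^ n) x = real k ^ n * x - of_int z" by blast
  define F where "F = \<lfloor>real k * (T k ^^ n) x\<rfloor>"
  have "(T k ^^ Suc n) x = real k * (T k ^^ n) x - of_int F"
    unfolding F_def by (simp add: T_def)
  also have "\<dots> = real k * (real k ^ n * x - of_int z) - of_int F" unfolding z ..
  also have "\<dots> = real k ^ Suc n * x - of_int (int k * z + F)"
    by (simp add: algebra_simps)
  finally show ?case by blast
qed

lemma part_b:
  assumes xg: "x \<in> g_preimage k (W 2 (g k a) (g k b))" and xB: "x \<in> B k"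
  shows False
proof -
  have x: "0 \<le> x" "x \<le> 1" "g k x \<in> W 2 (g k a) (g k b)" using xg unfolding g_preimage_def by auto
  obtain l n where ln: "x = real l / real k ^ n" "1 \<le> l" "n \<ge> 1" using xB unfolding B_def by auto
  have pos: "(T k ^^ m) x > 0" for m
  proof (induction m)
    case 0 then show ?case using ln kp by simp
  next
    case (Suc m)
    let ?y = "(T k ^^ m) x"
    have o: "outer k ?y" using orb[OF x] by blast
    show ?case
    proof (cases "?y < 1 / real k")
      case True
      then show ?thesis using T_low[OF k _ True] Suc kp by simp
    next
      case False
      hence hi: "(real k - 1) / real k < ?y" "?y < 1" using o unfolding outer_def by auto
      have "real k - 1 < real k * ?y" using hi(1) kp by (simp add: field_simps)
      then show ?thesis using T_high[OF k hi] by simp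
    qed
  qed
  obtain z where z: "(T k ^^ n) x = real k ^ n * x - of_int z" using int_orbit by blast
  have "real k ^ n * x = real l" using ln kp by simp
  hence zz: "(T k ^^ n) x = of_int (int l - z)" using z by simp
  obtain n' where n': "n = Suc n'" using ln(3) by (cases n) auto
  have "0 \<le> (T k ^^ n) x \<and> (T k ^^ n) x < 1" unfolding n' using T_range by simp
  hence "int l - z = 0" unfolding zz by linarith
  thus False using pos[of n] zz by simp
qed

lemma part_c1:
  assumes xW: "x \<in> W k a b"
  shows "x \<in> C k \<and> x \<in> g_preimage k (W 2 (g k a) (g k b))"
proof -
  have x: "0 \<le> x" "x < 1" and av: "\<And>n. (T k ^^ n) x \<notin> {a<..<b}" using xW unfolding W_def by auto
  have Yr: "0 \<le> (T k ^^ n) x \<and> (T k ^^ n) x < 1" for n using x T_range by (cases n) auto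
  have lh: "(T k ^^ n) x \<le> a \<or> b \<le> (T k ^^ n) x" for n using av[of n] by auto
  have rk: "real (k - 1) = real k - 1" using k by (simp add: of_nat_diff)
  have dig: "nat \<lfloor>real k * (T k ^^ n) x\<rfloor> \<in> {0, k - 1}" for n
  proof (cases "(T k ^^ n) x \<le> a")
    case True
    have "real k * (T k ^^ n) x \<le> real k * a" using True kp by (intro mult_left_mono) auto
    moreover have "real k * a < 1" using a1 kp by (simp add: field_simps)
    ultimately have "real k * (T k ^^ n) x < 1" by simp
    hence "\<lfloor>real k * (T k ^^ n) x\<rfloor> = 0" using Yr[of n] kp by (intro floor_unique) auto
    then show ?thesis by simp
  next
    case False
    hence "b \<le> (T k ^^ n) x" using lh by auto
    hence "real k * b \<le> real k * (T k ^^ n) x" using kp by (intro mult_left_mono) auto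
    moreover have "real k - 1 < real k * b" using b0 kp by (simp add: field_simps)
    ultimately have "real k - 1 < real k * (T k ^^ n) x" by simp
    moreover have "real k * (T k ^^ n) x < real k" using Yr[of n] kp by simp
    ultimately have "\<lfloor>real k * (T k ^^ n) x\<rfloor> = int (k - 1)" using rk by (intro floor_unique) auto
    then show ?thesis by simp
  qed
  have ex: "is_expansion k (\<lambda>n. if n = 0 then 0 else nat \<lfloor>real k * (T k ^^ (n - 1)) x\<rfloor>) x"
    using greedy[of k x] k x by simp
  have xC: "x \<in> C k"
    unfolding C_def using ex dig x unfolding is_expansion_def
    by (intro CollectI conjI exI[of _ "\<lambda>n. if n = 0 then 0 else nat \<lfloor>real k * (T k ^^ (n - 1)) x\<rfloor>"]) auto
  have conj: "g k ((T k ^^ n) x) = (T 2 ^^ n) (g k x)" for n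
  proof (induction n)
    case 0 then show ?case by simp
  next
    case (Suc n)
    let ?y = "(T k ^^ n) x"
    show ?case
    proof (cases "?y \<le> a")
      case True
      hence lo: "?y < 1 / real k" using a1 by simp
      have TY: "(T k ^^ Suc n) x = real k * ?y" using T_low[OF k _ lo] Yr by simp
      have g1: "g k ?y = g k (real k * ?y) / 2" using R1[OF k] lo Yr[of n] by simp
      have "g k ?y \<le> g k a" using g_mono[OF k _ True a_le1] Yr[of n] by simp
      hence "g k ?y < 1/2" using ga by simp
      moreover have "0 \<le> g k ?y" using g_range[OF k] Yr[of n] by simp
      ultimately have "T 2 (g k ?y) = 2 * g k ?y" using T2_low by simp
      then show ?thesis using Suc TY g1 by simp
    next
      case False
      hence "b \<le> ?y" using lh by auto
      hence hi: "(real k - 1) / real k < ?y" using b0 by simp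
      have TY: "(T k ^^ Suc n) x = real k * ?y - (real k - 1)" using T_high[OF k hi] Yr by simp
      have g2: "g k ?y = 1/2 + g k (real k * ?y - (real k - 1)) / 2" using R2[OF k] hi Yr[of n] by simp
      have "0 \<le> real k * ?y - (real k - 1)" "real k * ?y - (real k - 1) \<le> 1" using hi Yr[of n] kp by (auto simp: field_simps)
      hence "g k (real k * ?y - (real k - 1)) \<ge> 0" using g_range[OF k] by simp
      hence "g k ?y \<ge> 1/2" using g2 by simp
      moreover have "g k ?y < 1" using g_lt1[OF k] Yr[of n] by simp
      ultimately have "T 2 (g k ?y) = 2 * g k ?y - 1" using T2_high by simp
      then show ?thesis using Suc TY g2 by simp
    qed
  qed
  have "(T 2 ^^ n) (g k x) \<notin> {g k a<..<g k b}" for n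
  proof (cases "(T k ^^ n) x \<le> a")
    case True
    hence "g k ((T k ^^ n) x) \<le> g k a" using g_mono[OF k _ True a_le1] Yr[of n] by simp
    then show ?thesis using conj[of n] by simp
  next
    case False
    hence "b \<le> (T k ^^ n) x" using lh by auto
    hence "g k b \<le> g k ((T k ^^ n) x)" using g_mono[OF k b_ge0] Yr[of n] by simp
    then show ?thesis using conj[of n] by simp
  qed
  moreover have "0 \<le> g k x" "g k x < 1" using g_range[OF k] g_lt1[OF k] x by auto
  ultimately have "g k x \<in> W 2 (g k a) (g k b)" unfolding W_def by auto
  then show ?thesis using xC x unfolding g_preimage_def by auto
qed

end


theorem mainTheorem7:
  fixes k :: nat and a b :: real
  assumes "k \<ge> 3" and "0 \<le> a" and "a < 1 / real k"
    and "(real k - 1) / real k < b" and "b \<le> 1"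
  shows "W k a b \<subseteq> C k
    \<and> g_preimage k (W 2 (g k a) (g k b)) \<inter> B k = {}
    \<and> W k a b = C k \<inter> g_preimage k (W 2 (g k a) (g k b))"
proof -
  interpret abctx k a b using assms by unfold_locales
  have A: "W k a b \<subseteq> C k" using part_c1 by blast
  have Bq: "g_preimage k (W 2 (g k a) (g k b)) \<inter> B k = {}" using part_b by blast
  have Cq: "W k a b = C k \<inter> g_preimage k (W 2 (g k a) (g k b))" using part_c1 part_c2 by blast
  show ?thesis using A Bq Cq by blast
qed

end
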